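(* Let $\xi<-6$. There exists $\phi_0\in(0,\pi/4]$ such that for every $\phi\in(0,\phi_0]$ there is $c=c(\xi,\phi)>0$ such that for $z=u+\mathrm{i}v$ and each $i\in\{1,2,5,6\}$, $$\operatorname{Re}[2\mathrm{i}\theta(z)]\ge c v^2\ \text{ for } z\in\Omega_{i1}\cup\Omega_{i3},\qquad \operatorname{Re}[2\mathrm{i}\theta(z)]\le -c v^2\ \text{ for } z\in\Omega_{i2}\cup\Omega_{i4}.$$
   Context: $\theta(z)=\frac12(z+z^{-1})\big[\xi-2+(z-z^{-1})^2\big]$. For $\xi<-6$ the stationary points of $\theta$ are $\zeta_1=\sqrt{(-\xi-\sqrt{\xi^2-36})/6}\in(0,1)$, $\zeta_2=-\zeta_1$, $\zeta_3=1$, $\zeta_4=-1$, $\zeta_5=1/\zeta_1$, $\zeta_6=-\zeta_5$. With $z=u+\mathrm{i}v$ and $t_\phi=\tan\phi$, the regions are: $\Omega_{11}=\{\zeta_1/2<u<\zeta_1,\ 0<v<(\zeta_1-u)t_\phi\}$, $\Omega_{12}=\{\zeta_1<u<\frac{\zeta_1+1}{2},\ 0<v<(u-\zeta_1)t_\phi\}$, $\Omega_{13}=\{\zeta_1<u<\frac{\zeta_1+1}{2},\ -(u-\zeta_1)t_\phi<v<0\}$, $\Omega_{14}=\{\zeta_1/2<u<\zeta_1,\ -(\zeta_1-u)t_\phi<v<0\}$; $\Omega_{21}=\{\zeta_2<u<\zeta_2/2,\ 0<v<(u-\zeta_2)t_\phi\}$, $\Omega_{22}=\{\frac{\zeta_2-1}{2}<u<\zeta_2,\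 0<v<(\zeta_2-u)t_\phi\}$, $\Omega_{23}=\{\frac{\zeta_2-1}{2}<u<\zeta_2,\ -(\zeta_2-u)t_\phi<v<0\}$, $\Omega_{24}=\{\zeta_2<u<\zeta_2/2,\ -(u-\zeta_2)t_\phi<v<0\}$; $\Omega_{51}=\{\frac{1+\zeta_5}{2}<u<\zeta_5,\ 0<v<(\zeta_5-u)t_\phi\}$, $\Omega_{52}=\{u>\zeta_5,\ 0<v<(u-\zeta_5)t_\phi\}$, $\Omega_{53}=\{u>\zeta_5,\ -(u-\zeta_5)t_\phi<v<0\}$, $\Omega_{54}=\{\frac{1+\zeta_5}{2}<u<\zeta_5,\ -(\zeta_5-u)t_\phi<v<0\}$; $\Omega_{61}=\{\zeta_6<u<\frac{\zeta_6-1}{2},\ 0<v<(u-\zeta_6)t_\phi\}$, $\Omega_{62}=\{u<\zeta_6,\ 0<v<(\zeta_6-u)t_\phi\}$, $\Omega_{63}=\{u<\zeta_6,\ -(\zeta_6-u)t_\phi<v<0\}$, $\Omega_{64}=\{\zeta_6<u<\frac{\zeta_6-1}{2},\ -(u-\zeta_6)t_\phi<v<0\}$. *)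

theory Defs
  imports "HOL-Analysis.Analysis"
begin

definition theta :: "real \<Rightarrow> complex \<Rightarrow> complex" where
  "theta xi z = (1/2) * (z + inverse z) * (complex_of_real (xi - 2) + (z - inverse z)^2)"

definition zeta1 :: "real \<Rightarrow> real" where
  "zeta1 xi = sqrt ((- xi - sqrt (xi^2 - 36)) / 6)"

definition zeta2 :: "real \<Rightarrow> real" where "zeta2 xi = - zeta1 xi"
definition zeta5 :: "real \<Rightarrow> real" where "zeta5 xi = 1 / zeta1 xi"
definition zeta6 :: "real \<Rightarrow> real" where "zeta6 xi = - zeta5 xi"

definition Omega :: "real \<Rightarrow> real \<Rightarrow> nat \<Rightarrow> nat \<Rightarrow> complex set" where
  "Omega xi phi i j =
    (let t = tan phi; z1 = zeta1 xi; z2 = zeta2 xi; z5 = zeta5 xi; z6 = zeta6 xi in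
     {z. let u = Re z; v = Im z in
      (i = 1 \<and> j = 1 \<and> z1/2 < u \<and> u < z1 \<and> 0 < v \<and> v < (z1 - u) * t) \<or>
      (i = 1 \<and> j = 2 \<and> z1 < u \<and> u < (z1 + 1)/2 \<and> 0 < v \<and> v < (u - z1) * t) \<or>
      (i = 1 \<and> j = 3 \<and> z1 < u \<and> u < (z1 + 1)/2 \<and> - ((u - z1) * t) < v \<and> v < 0) \<or>
      (i = 1 \<and> j = 4 \<and> z1/2 < u \<and> u < z1 \<and> - ((z1 - u) * t) < v \<and> v < 0) \<or>
      (i = 2 \<and> j = 1 \<and> z2 < u \<and> u < z2/2 \<and> 0 < v \<and> v < (u - z2) * t) \<or>
      (i = 2 \<and> j = 2 \<and> (z2 - 1)/2 < u \<and> u < z2 \<and> 0 < v \<and> v < (z2 - u) * t) \<or>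
      (i = 2 \<and> j = 3 \<and> (z2 - 1)/2 < u \<and> u < z2 \<and> - ((z2 - u) * t) < v \<and> v < 0) \<or>
      (i = 2 \<and> j = 4 \<and> z2 < u \<and> u < z2/2 \<and> - ((u - z2) * t) < v \<and> v < 0) \<or>
      (i = 5 \<and> j = 1 \<and> (1 + z5)/2 < u \<and> u < z5 \<and> 0 < v \<and> v < (z5 - u) * t) \<or>
      (i = 5 \<and> j = 2 \<and> z5 < u \<and> 0 < v \<and> v < (u - z5) * t) \<or>
      (i = 5 \<and> j = 3 \<and> z5 < u \<and> - ((u - z5) * t) < v \<and> v < 0) \<or>
      (i = 5 \<and> j = 4 \<and> (1 + z5)/2 < u \<and> u < z5 \<and> - ((z5 - u) * t) < v \<and> v < 0) \<or>
      (i = 6 \<and> j = 1 \<and> z6 < u \<and> u < (z6 - 1)/2 \<and> 0 < v \<and> v < (u - z6) * t) \<or>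
      (i = 6 \<and> j = 2 \<and> u < z6 \<and> 0 < v \<and> v < (z6 - u) * t) \<or>
      (i = 6 \<and> j = 3 \<and> u < z6 \<and> - ((z6 - u) * t) < v \<and> v < 0) \<or>
      (i = 6 \<and> j = 4 \<and> z6 < u \<and> u < (z6 - 1)/2 \<and> - ((u - z6) * t) < v \<and> v < 0)})"

end

theory Submission
  imports Defs "HOL-Analysis.Analysis"
begin



definition FF :: "real \<Rightarrow> real \<Rightarrow> real \<Rightarrow> real" where
  "FF p u v = (let r = u^2+v^2; a = u + u/r; b = v - v/r; A = p + 1/p in b*(3*(A^2 - a^2) + b^2))"

lemma FF_negu: "FF p (-u) v = FF p u v"
proof -
  have e: "(-u)^2+v^2 = u^2+v^2" by simp
  have b: "-u + -u/(u^2+v^2) = -(u + u/(u^2+v^2))" by simp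
  show ?thesis unfolding FF_def Let_def e b by (simp only: power2_minus)
qed

lemma FF_negv: "FF p u (-v) = - FF p u v"
proof -
  have e: "u^2+(-v)^2 = u^2+v^2" by simp
  have b: "-v - -v/(u^2+v^2) = -(v - v/(u^2+v^2))" by simp
  show ?thesis unfolding FF_def Let_def e b by (simp only: power2_minus mult_minus_left)
qed

lemma zeta1_props:
  assumes "xi < -6"
  shows "0 < zeta1 xi" "zeta1 xi < 1" "3*(zeta1 xi + 1/zeta1 xi)^2 = 6 - xi"
proof -
  define s where "s = (- xi - sqrt (xi^2 - 36)) / 6"
  have "(6::real)^2 \<le> (-xi)^2" by (rule power_mono) (use assms in auto)
  hence x36: "36 \<le> xi^2" by simp
  have q: "sqrt (xi^2-36) ^2 = xi^2 - 36" using x36 by simp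
  have sq0: "sqrt (xi^2-36) \<ge> 0" using x36 by simp
  have "sqrt (xi^2-36) < -xi"
    using assms by (smt (verit) real_sqrt_less_mono real_sqrt_abs) 
  hence s0: "0 < s" by (simp add: s_def)
  have "-xi - 6 < sqrt (xi^2-36)"
  proof -
    have "(-xi-6)^2 < xi^2 - 36" using assms by (simp add: power2_eq_square algebra_simps)
    hence "sqrt ((-xi-6)^2) < sqrt (xi^2-36)" by (rule real_sqrt_less_mono)
    thus ?thesis using assms by simp
  qed
  hence s1: "s < 1" by (simp add: s_def)
  have z: "zeta1 xi = sqrt s" by (simp add: zeta1_def s_def)
  show "0 < zeta1 xi" using s0 z by simp
  show "zeta1 xi < 1" using s1 s0 z by simp
  have ss: "(sqrt s)^2 = s" using s0 by simp
  have R: "sqrt (xi^2-36) * sqrt (xi^2-36) = xi^2 - 36" using x36 by simp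
  have "3 * (s * s) + xi * s + 3 = (sqrt (xi^2-36) * sqrt (xi^2-36) - xi^2 + 36)/12"
    unfolding s_def by (simp add: field_simps power2_eq_square)
  hence e: "3 * (s * s) + xi * s + 3 = 0" using R by simp
  have "(sqrt s + 1/sqrt s)^2 = s + 1/s + 2" using s0 ss
    by (simp add: power2_eq_square field_simps)
  moreover have "3*(s + 1/s + 2) = 6 - xi" using e s0
    by (simp add: field_simps power2_eq_square)
  ultimately show "3*(zeta1 xi + 1/zeta1 xi)^2 = 6 - xi" using z by simp
qed

lemma Re_theta:
  assumes z: "z \<noteq> 0" and A: "3*(p+1/p)^2 = 6 - xi"
  shows "Re (2*\<i>*theta xi z) = FF p (Re z) (Im z)"
proof -
  define w where "w = z + inverse z"
  have "(z - inverse z)^2 = w^2 - 4" using z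
    by (simp add: w_def power2_eq_square field_simps)
  moreover have "theta xi z = (1/2) * w * (complex_of_real (xi - 2) + (z - inverse z)^2)"
    by (simp add: theta_def w_def)
  ultimately have "theta xi z = (1/2) * w * (complex_of_real (xi - 2) + w^2 - 4)" by simp
  hence th: "theta xi z = (1/2) * w * (complex_of_real (xi - 6) + w^2)"
    by (simp add: of_real_diff algebra_simps)
  have Rw: "Re w = Re z + Re z/((Re z)^2+(Im z)^2)" by (simp add: w_def)
  have Iw: "Im w = Im z - Im z/((Re z)^2+(Im z)^2)" by (simp add: w_def)
  have xi: "xi - 6 = - 3*(p+1/p)^2" using A by simp
  have "Re (2*\<i>*theta xi z) = (Im w) * (3*(p+1/p)^2 - 3*(Re w)^2 + (Im w)^2)"
    unfolding th xi by (simp add: power2_eq_square power3_eq_cube algebra_simps)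
  thus ?thesis unfolding FF_def Let_def Rw Iw by simp
qed




lemma tsmall0:
  fixes P t :: real
  assumes p: "0<P" "P<1" and t: "0<t" "t \<le> P*(1-P)/8"
  shows "t \<le> 1" "t^2 \<le> P*P*(1-P)/64"
proof -
  have "P*(1-P) \<le> 1*1" by (rule mult_mono) (use p in auto)
  thus "t \<le> 1" using t by simp
  have "t^2 \<le> (P*(1-P)/8)^2" by (rule power_mono) (use t in auto)
  also have "\<dots> = P*P*((1-P)*(1-P))/64" by (simp add: power2_eq_square)
  also have "\<dots> \<le> P*P*((1-P)*1)/64"
    by (intro divide_right_mono mult_left_mono) (use p in auto)
  finally show "t^2 \<le> P*P*(1-P)/64" by simp
qed

lemma tsmall:
  fixes p t :: real
  assumes p: "0<p" "p<1" and t: "0<t" "t \<le> p^2*(1-p^2)/8"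
  shows "t \<le> 1" "t^2 \<le> p^2*p^2*(1-p^2)/64" "t^2 \<le> (1-p)/32"
proof -
  have p2: "p^2 < 1" "0 < p^2" using p by (auto simp: power_less_one_iff)
  show "t \<le> 1" "t^2 \<le> p^2*p^2*(1-p^2)/64" using tsmall0[OF p2(2) p2(1) t] by auto
  have "p^2*p^2*(1-p^2) \<le> 1*(1-p^2)" by (rule mult_right_mono[OF mult_le_one]) (use p2 in auto)
  also have "1-p^2 \<le> 2*(1-p)"
  proof -
    have "0 \<le> (1-p)*(1-p)" by simp
    thus ?thesis by (simp add: power2_eq_square algebra_simps)
  qed
  finally show "t^2 \<le> (1-p)/32" using \<open>t^2 \<le> p^2*p^2*(1-p^2)/64\<close> by simp
qed




lemma lin1: "(W::real) \<le> Z \<Longrightarrow> e = X - Y \<Longrightarrow> Z \<le> X \<Longrightarrow> Y \<le> Z/2 \<Longrightarrow> W/2 \<le> e"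
  by linarith

lemma lin2: "(V::real) \<le> 2*W \<Longrightarrow> W \<le> S \<Longrightarrow> B \<le> W/8 \<Longrightarrow> 0 \<le> W \<Longrightarrow> V \<le> 3*S - B"
  by linarith

lemma caseL1:
  fixes p u v t :: real
  assumes p: "0<p" "p<1" and t: "0<t" "t \<le> p^2 * (1-p^2)/8"
    and u: "p/2<u" "u<p" and v: "0<v" "v < (p-u) * t"
  shows "(1-p)^2 * v^2 \<le> FF p u v"
proof -
  from tsmall[OF p t] have t1: "t \<le> 1" and tt: "t^2 \<le> p^2 * p^2 * (1-p^2)/64" by auto
  define r where "r = u^2+v^2"
  define a where "a = u + u/r"
  define b where "b = v - v/r"
  define A where "A = p + 1/p"
  have F: "FF p u v = (-b) * (3 * (a^2-A^2) - b^2)"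
    by (simp add: FF_def Let_def r_def a_def b_def A_def algebra_simps)
  have up: "0<u" using u p by simp
  have d: "0 < p-u" using u by simp
  have p2: "0<p^2" "p^2<1" using p by (auto simp: power_less_one_iff)
  have q: "0 < 1-p^2" using p2 by simp
  have pp: "p^2 * p^2 \<le> 1" using p2 by (intro mult_le_one) auto
  have tt2: "t^2 \<le> (1-p^2)/64"
  proof -
    have "p^2 * p^2 * (1-p^2) \<le> 1 * (1-p^2)" by (rule mult_right_mono) (use pp q in auto)
    thus ?thesis using tt by simp
  qed
  have vd: "v < p-u"
  proof -
    have "(p-u) * t \<le> (p-u) * 1" by (rule mult_left_mono) (use t1 d in auto)
    thus ?thesis using v by simp
  qed
  have v2: "v^2 \<le> (p-u)^2 * t^2"
  proof -
    have "v^2 \<le> ((p-u) * t)^2" by (rule power_mono) (use v in auto)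
    thus ?thesis by (simp add: power_mult_distrib)
  qed
  have pu: "(p-u)^2 \<le> (p-u) * (p/2)"
  proof -
    have "(p-u) * (p-u) \<le> (p-u) * (p/2)" by (rule mult_left_mono) (use u d in auto)
    thus ?thesis by (simp add: power2_eq_square)
  qed
  have v2b: "v^2 \<le> (p-u) * (p/2) * t^2"
  proof -
    have "(p-u)^2 * t^2 \<le> (p-u) * (p/2) * t^2" by (rule mult_right_mono) (use pu in auto)
    thus ?thesis using v2 by simp
  qed
  have v2c: "v^2 \<le> t^2"
  proof -
    have "(p-u) * (p/2) \<le> 1" using d u p by (intro mult_le_one) auto
    hence "(p-u) * (p/2) * t^2 \<le> 1 * t^2" by (intro mult_right_mono) auto
    thus ?thesis using v2b by simp
  qed
  have u2: "p^2/4 < u^2"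
  proof -
    have "(p/2)^2 < u^2" by (rule power_strict_mono) (use u p in auto)
    thus ?thesis by (simp add: power_divide)
  qed
  have u2b: "u^2 < p^2" by (rule power_strict_mono) (use u up in auto)
  have rge: "u^2 \<le> r" unfolding r_def by simp
  have "0 < u^2" using up by simp
  hence r0: "0 < r" using rge by linarith
  have rlt: "r \<le> (1+p^2)/2" unfolding r_def using u2b v2c tt2 q by simp
  have r1: "r < 1" using rlt p2 by simp
  have nb: "v * (1-p^2)/2 \<le> -b"
  proof -
    have e: "-b = v * ((1-r)/r)" unfolding b_def using r0 by (simp add: field_simps)
    have "(1-r) * r \<le> (1-r) * 1" by (rule mult_left_mono) (use r1 in auto)
    hence "1-r \<le> (1-r)/r" using r0 by (simp add: le_divide_eq)
    moreover have "(1-p^2)/2 \<le> 1 - r" using rlt by (simp add: field_simps)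
    ultimately have "(1-p^2)/2 \<le> (1-r)/r" by (rule order_trans[rotated])
    hence "v * ((1-p^2)/2) \<le> v * ((1-r)/r)" by (rule mult_left_mono) (use v in auto)
    thus ?thesis using e by simp
  qed
  have aA: "a - A = (p-u) * ((1/p-u)/u) - v^2/(u * r)"
  proof -
    have v2r: "v^2 = r - u^2" by (simp add: r_def)
    have h1: "v^2/(u * r) = 1/u - u/r" unfolding v2r using up r0 by (simp add: field_simps power2_eq_square)
    have h2: "(p-u) * ((1/p-u)/u) = 1/u - p - 1/p + u" using up p by (simp add: field_simps)
    show ?thesis unfolding h1 h2 a_def A_def by simp
  qed
  have e1: "(p-u) * ((1-p^2)/p^2) \<le> (p-u) * ((1/p-u)/u)"
  proof -
    have e: "(1/p-u)/u = 1/(p * u) - 1" using up p by (simp add: field_simps)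
    have "1/(p * p) \<le> 1/(p * u)" by (rule divide_left_mono) (use up p u in auto)
    moreover have "(1-p^2)/p^2 = 1/(p * p) - 1" using p by (simp add: field_simps power2_eq_square)
    ultimately have "(1-p^2)/p^2 \<le> (1/p-u)/u" using e by simp
    thus ?thesis by (rule mult_left_mono) (use d in auto)
  qed
  have e2: "v^2/(u * r) \<le> (p-u) * ((1-p^2)/p^2)/2"
  proof -
    have ur: "(p/2) * (p^2/4) \<le> u * r" by (rule mult_mono) (use u u2 rge up in auto)
    have "v^2/(u * r) \<le> v^2/((p/2) * (p^2/4))"
      by (rule divide_left_mono) (use ur p2 p up r0 in \<open>auto intro!: mult_pos_pos\<close>)
    also have "\<dots> \<le> ((p-u) * (p/2) * t^2)/((p/2) * (p^2/4))"
      by (rule divide_right_mono) (use v2b p2 p in auto)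
    also have "\<dots> = (p-u) * t^2 * 4/p^2" using p by (simp add: field_simps power2_eq_square)
    also have "\<dots> \<le> (p-u) * ((1-p^2)/64) * 4/p^2"
      by (intro divide_right_mono mult_right_mono mult_left_mono) (use tt2 d in auto)
    also have "\<dots> = ((p-u) * ((1-p^2)/p^2))/16" using p by (simp add: field_simps)
    also have "\<dots> \<le> (p-u) * ((1-p^2)/p^2)/2"
    proof -
      have "0 \<le> (p-u) * ((1-p^2)/p^2)" using d q p2 by simp
      thus ?thesis by simp
    qed
    finally show ?thesis .
  qed
  have K: "(1-p^2) \<le> (1-p^2)/p^2" using q p2 by (simp add: le_divide_eq)
  have aA2: "(p-u) * (1-p^2)/2 \<le> a - A"
  proof -
    have "(p-u) * (1-p^2) \<le> (p-u) * ((1-p^2)/p^2)" by (rule mult_left_mono) (use K d in auto)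
    from lin1[OF this aA e1 e2] show ?thesis by simp
  qed
  have ip: "1 < 1/p" using p by (simp add: field_simps)
  have A1: "1 < A" unfolding A_def using p ip by linarith
  have aAsum: "2 \<le> a + A" using aA2 A1 d q by (smt (verit) mult_pos_pos divide_pos_pos)
  have sq: "(p-u) * (1-p^2) \<le> a^2 - A^2"
  proof -
    have pos: "0 < (p-u) * (1-p^2)/2" using d q by simp
    have "((p-u) * (1-p^2)/2) * 2 \<le> (a-A) * (a+A)" by (rule mult_mono) (use aA2 aAsum pos in linarith)+
    moreover have "(a-A) * (a+A) = a^2 - A^2" by (simp add: power2_eq_square algebra_simps)
    moreover have "((p-u) * (1-p^2)/2) * 2 = (p-u) * (1-p^2)" by simp
    ultimately show ?thesis by linarith
  qed
  have b2: "b^2 \<le> (p-u) * (1-p^2)/8"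
  proof -
    have e: "-b = v * ((1-r)/r)" unfolding b_def using r0 by (simp add: field_simps)
    have "0 < v * (1-p^2)/2" using v q by simp
    hence nb0: "0 \<le> -b" using nb by linarith
    have "(1-r)/r \<le> 1/r" using r0 r1 by (simp add: divide_right_mono)
    also have "1/r \<le> 1/(p^2/4)" by (rule divide_left_mono) (use rge u2 p2 r0 in \<open>auto intro!: mult_pos_pos\<close>)
    finally have "(1-r)/r \<le> 1/(p^2/4)" .
    hence "v * ((1-r)/r) \<le> v * (1/(p^2/4))" by (rule mult_left_mono) (use v in auto)
    hence "-b \<le> v * (4/p^2)" using e by simp
    hence "(-b)^2 \<le> (v * (4/p^2))^2" by (rule power_mono) (use nb0 in auto)
    hence "b^2 \<le> v^2 * (16/(p^2 * p^2))" by (simp add: power_mult_distrib power_divide power2_eq_square mult.commute)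
    also have "\<dots> \<le> ((p-u) * (p/2) * t^2) * (16/(p^2 * p^2))"
      by (rule mult_right_mono) (use v2b in auto)
    also have "\<dots> \<le> ((p-u) * (p/2) * (p^2 * p^2 * (1-p^2)/64)) * (16/(p^2 * p^2))"
      by (intro mult_right_mono mult_left_mono) (use tt d p in auto)
    also have "\<dots> = (p-u) * p * (1-p^2)/8" using p by (simp add: field_simps)
    also have "\<dots> \<le> (p-u) * 1 * (1-p^2)/8"
      by (intro divide_right_mono mult_right_mono mult_left_mono) (use d p q in auto)
    finally show ?thesis by simp
  qed
  have Q: "2 * v * (1-p^2) \<le> 3 * (a^2-A^2) - b^2"
  proof -
    have h: "2 * v * (1-p^2) \<le> 2 * ((p-u) * (1-p^2))" using vd q by simp
    have "0 \<le> (p-u) * (1-p^2)" using d q by simp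
    from lin2[OF h sq _ this] b2 show ?thesis by simp
  qed
  have pv: "0 < v * (1-p^2)/2" using v q by simp
  have pv2: "0 < 2 * v * (1-p^2)" using v q by simp
  have "(v * (1-p^2)/2) * (2 * v * (1-p^2)) \<le> (-b) * (3 * (a^2-A^2) - b^2)"
    by (rule mult_mono) (use nb Q pv pv2 in linarith)+
  moreover have "(v * (1-p^2)/2) * (2 * v * (1-p^2)) = v^2 * (1-p^2)^2" by (simp add: power2_eq_square)
  ultimately have G: "v^2 * (1-p^2)^2 \<le> FF p u v" unfolding F by linarith
  have "(1-p)^2 \<le> (1-p^2)^2" by (rule power_mono) (use p in \<open>auto simp: power2_eq_square\<close>)
  hence "(1-p)^2 * v^2 \<le> (1-p^2)^2 * v^2" by (rule mult_right_mono) simp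
  thus ?thesis using G by (simp add: mult.commute)
qed




lemma aA_gen:
  fixes p u v r :: real
  assumes "u \<noteq> 0" "p \<noteq> 0" "r = u^2 + v^2" "r \<noteq> 0"
  shows "(u + u/r) - (p + 1/p) = (p-u) * ((1/p-u)/u) - v^2/(u * r)"
proof -
  have v2r: "v^2 = r - u^2" using assms by simp
  have h1: "v^2/(u * r) = 1/u - u/r" unfolding v2r using assms by (simp add: field_simps power2_eq_square)
  have h2: "(p-u) * ((1/p-u)/u) = 1/u - p - 1/p + u" using assms by (simp add: field_simps)
  show ?thesis unfolding h1 h2 by simp
qed

lemma A_ge2:
  fixes p :: real
  assumes "0 < p"
  shows "2 \<le> p + 1/p"
proof -
  have "p + 1/p - 2 = (1-p)^2/p" using assms by (simp add: field_simps power2_eq_square)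
  moreover have "0 \<le> (1-p)^2/p" using assms by simp
  ultimately show ?thesis by linarith
qed

lemma lin3: "(W::real) \<le> Z \<Longrightarrow> 0 \<le> Y \<Longrightarrow> a - A = -Z - Y \<Longrightarrow> W \<le> A - a"
  by linarith

lemma caseR1:
  fixes p u v t :: real
  assumes p: "0<p" "p<1" and t: "0<t" "t \<le> p^2 * (1-p^2)/8"
    and u: "p<u" "u<(p+1)/2" and v: "0<v" "v < (u-p) * t"
  shows "FF p u v \<le> - ((1-p)^2 * v^2)"
proof -
  from tsmall[OF p t] have t1: "t \<le> 1" by auto
  define r where "r = u^2+v^2"
  define a where "a = u + u/r"
  define b where "b = v - v/r"
  define A where "A = p + 1/p"
  have F: "FF p u v = - ((-b) * (3 * (A^2-a^2) + b^2))"
    by (simp add: FF_def Let_def r_def a_def b_def A_def algebra_simps)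
  have up: "0<u" using u p by simp
  have d: "0 < u-p" using u by simp
  have u1: "u < 1" using u p by simp
  have p2: "0<p^2" "p^2<1" using p by (auto simp: power_less_one_iff)
  have q: "0 < 1-p^2" using p2 by simp
  have vd: "v < u-p"
  proof -
    have "(u-p) * t \<le> (u-p) * 1" by (rule mult_left_mono) (use t1 d in auto)
    thus ?thesis using v by simp
  qed
  have "0 < u^2" using up by simp
  hence r0: "0 < r" unfolding r_def by (simp add: add_pos_nonneg)
  have ua: "u^2 \<le> ((p+1)/2)^2" by (rule power_mono) (use u up in auto)
  have va: "v^2 \<le> ((1-p)/2)^2" by (rule power_mono) (use vd u v in auto)
  have idr: "((p+1)/2)^2 + ((1-p)/2)^2 = (1+p^2)/2" by (simp add: field_simps power2_eq_square)
  have rlt: "r \<le> (1+p^2)/2" unfolding r_def using ua va idr by linarith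
  have r1: "r < 1" using rlt p2 by simp
  have nb: "v * (1-p^2)/2 \<le> -b"
  proof -
    have e: "-b = v * ((1-r)/r)" unfolding b_def using r0 by (simp add: field_simps)
    have "(1-r) * r \<le> (1-r) * 1" by (rule mult_left_mono) (use r1 in auto)
    hence "1-r \<le> (1-r)/r" using r0 by (simp add: le_divide_eq)
    moreover have "(1-p^2)/2 \<le> 1 - r" using rlt by (simp add: field_simps)
    ultimately have "(1-p^2)/2 \<le> (1-r)/r" by (rule order_trans[rotated])
    hence "v * ((1-p^2)/2) \<le> v * ((1-r)/r)" by (rule mult_left_mono) (use v in auto)
    thus ?thesis using e by simp
  qed
  have aA: "a - A = (p-u) * ((1/p-u)/u) - v^2/(u * r)"
    unfolding a_def A_def by (rule aA_gen) (use up p r0 r_def in auto)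
  have ip: "1 < 1/p" using p by (simp add: field_simps)
  have e1: "(1-p)/2 \<le> (1/p-u)/u"
  proof -
    have X: "(1-p)/2 \<le> 1/p - u" using ip u by (simp add: field_simps)
    have X0: "0 \<le> 1/p - u" using ip u1 by simp
    have "(1/p-u) * u \<le> (1/p-u) * 1" by (rule mult_left_mono) (use X0 u1 in auto)
    hence "1/p - u \<le> (1/p-u)/u" using up by (simp add: le_divide_eq)
    thus ?thesis using X by linarith
  qed
  have Aa: "(u-p) * ((1-p)/2) \<le> A - a"
  proof -
    have h: "(u-p) * ((1-p)/2) \<le> (u-p) * ((1/p-u)/u)" by (rule mult_left_mono) (use e1 d in auto)
    moreover have "0 \<le> v^2/(u * r)" using up r0 by simp
    moreover have "a - A = - ((u-p) * ((1/p-u)/u)) - v^2/(u * r)" using aA by (metis minus_diff_eq mult_minus_left)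
    ultimately show ?thesis by (rule lin3)
  qed
  have A2: "2 \<le> A" unfolding A_def using A_ge2 p by simp
  have "0 < u/r" using up r0 by simp
  hence a0: "0 < a" unfolding a_def using up by linarith
  have sq: "(u-p) * (1-p) \<le> A^2 - a^2"
  proof -
    have pos: "0 \<le> (u-p) * ((1-p)/2)" using d p by simp
    have "((u-p) * ((1-p)/2)) * 2 \<le> (A-a) * (A+a)" by (rule mult_mono) (use Aa A2 a0 pos in linarith)+
    moreover have "(A-a) * (A+a) = A^2 - a^2" by (simp add: power2_eq_square algebra_simps)
    moreover have "((u-p) * ((1-p)/2)) * 2 = (u-p) * (1-p)" by simp
    ultimately show ?thesis by linarith
  qed
  have Q: "3 * (v * (1-p)) \<le> 3 * (A^2-a^2) + b^2"
  proof -
    have "v * (1-p) \<le> (u-p) * (1-p)" by (rule mult_right_mono) (use vd p in auto)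
    moreover have "0 \<le> b^2" by simp
    ultimately show ?thesis using sq by (smt (verit))
  qed
  have pv: "0 \<le> v * (1-p^2)/2" using v q by simp
  have pv2: "0 \<le> 3 * (v * (1-p))" using v p by simp
  have M: "(v * (1-p^2)/2) * (3 * (v * (1-p))) \<le> (-b) * (3 * (A^2-a^2) + b^2)"
    by (rule mult_mono) (use nb Q pv pv2 in linarith)+
  have pp: "1-p \<le> 1-p^2" using p by (simp add: power2_eq_square mult_less_cancel_left1 less_imp_le)
  have "(1-p) * (1-p) \<le> (1-p^2) * (1-p)" by (rule mult_right_mono) (use pp p in auto)
  hence "v^2 * ((1-p) * (1-p)) \<le> v^2 * ((1-p^2) * (1-p))" by (rule mult_left_mono) simp
  moreover have "(v * (1-p^2)/2) * (3 * (v * (1-p))) = (3/2) * (v^2 * ((1-p^2) * (1-p)))"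
    by (simp add: power2_eq_square)
  moreover have "0 \<le> v^2 * ((1-p) * (1-p))" by simp
  moreover have "(1-p)^2 * v^2 = v^2 * ((1-p) * (1-p))" by (simp add: power2_eq_square)
  ultimately show ?thesis using M F by linarith
qed




lemma lin4: "(W::real) \<le> Z * (-1) \<Longrightarrow> 0 \<le> Y \<Longrightarrow> a - A = Z - Y \<Longrightarrow> W \<le> A - a"
  by linarith

lemma caseL5:
  fixes p u v t :: real
  assumes p: "0<p" "p<1" and t: "0<t" "t \<le> p^2 * (1-p^2)/8"
    and u: "(1 + 1/p)/2 < u" "u < 1/p" and v: "0<v" "v < (1/p-u) * t"
  shows "(1-p)^2 * v^2 \<le> FF p u v"
proof -
  from tsmall[OF p t] have t1: "t \<le> 1" by auto
  define r where "r = u^2+v^2"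
  define a where "a = u + u/r"
  define b where "b = v - v/r"
  define A where "A = p + 1/p"
  have F: "FF p u v = b * (3 * (A^2-a^2) + b^2)"
    by (simp add: FF_def Let_def r_def a_def b_def A_def)
  have ip: "1 < 1/p" using p by (simp add: field_simps)
  have u1: "1 < u" using u ip by simp
  have up: "0 < u" using u1 by simp
  have d: "0 < 1/p-u" using u by simp
  have vd: "v < 1/p-u"
  proof -
    have "(1/p-u) * t \<le> (1/p-u) * 1" by (rule mult_left_mono) (use t1 d in auto)
    thus ?thesis using v by simp
  qed
  have uu: "u \<le> u^2"
  proof -
    have "u * 1 \<le> u * u" by (rule mult_left_mono) (use u1 in auto)
    thus ?thesis by (simp add: power2_eq_square)
  qed
  have rge: "u^2 \<le> r" unfolding r_def by simp
  have r0: "0 < r" using rge uu up by linarith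
  have ru: "u \<le> r" using rge uu by linarith
  have iu: "1/u \<le> (1+p)/2"
  proof -
    have "((1 + 1/p)/2) * (1+p) \<le> u * (1+p)" by (rule mult_right_mono) (use u p in auto)
    moreover have "((1 + 1/p)/2) * (1+p) = 2 + (1-p)^2/(2*p)" using p by (simp add: field_simps power2_eq_square)
    moreover have "0 \<le> (1-p)^2/(2*p)" using p by simp
    ultimately have "2 \<le> u * (1+p)" by linarith
    thus ?thesis using up by (simp add: divide_le_eq mult.commute)
  qed
  have bb: "v * ((1-p)/2) \<le> b"
  proof -
    have "1/r \<le> 1/u" by (rule divide_left_mono) (use ru up r0 in auto)
    hence "(1-p)/2 \<le> 1 - 1/r" using iu by (simp add: field_simps)
    hence "v * ((1-p)/2) \<le> v * (1 - 1/r)" by (rule mult_left_mono) (use v in auto)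
    thus ?thesis unfolding b_def by (simp add: algebra_simps)
  qed
  have aA: "a - A = (p-u) * ((1/p-u)/u) - v^2/(u * r)"
    unfolding a_def A_def by (rule aA_gen) (use up p r0 r_def in auto)
  have e1: "(1/p-u) * (1-p) \<le> (p-u) * ((1/p-u)/u) * (-1)"
  proof -
    have "(p-u) * ((1/p-u)/u) * (-1) = (1/p-u) * ((u-p)/u)" by (simp add: algebra_simps)
    moreover have "1-p \<le> (u-p)/u"
    proof -
      have "p/u \<le> p/1" by (rule divide_left_mono) (use p u1 in auto)
      moreover have "(u-p)/u = 1 - p/u" using up by (simp add: field_simps)
      ultimately show ?thesis by simp
    qed
    hence "(1/p-u) * (1-p) \<le> (1/p-u) * ((u-p)/u)" by (rule mult_left_mono) (use d in auto)
    ultimately show ?thesis by simp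
  qed
  have Aa: "(1/p-u) * (1-p) \<le> A - a"
  proof -
    have "0 \<le> v^2/(u * r)" using up r0 by simp
    from lin4[OF e1 this aA] show ?thesis .
  qed
  have A2: "2 \<le> A" unfolding A_def using A_ge2 p by simp
  have "0 < u/r" using up r0 by simp
  hence a0: "0 < a" unfolding a_def using up by linarith
  have sq: "2 * ((1/p-u) * (1-p)) \<le> A^2 - a^2"
  proof -
    have pos: "0 \<le> (1/p-u) * (1-p)" using d p by simp
    have "((1/p-u) * (1-p)) * 2 \<le> (A-a) * (A+a)" by (rule mult_mono) (use Aa A2 a0 pos in linarith)+
    moreover have "(A-a) * (A+a) = A^2 - a^2" by (simp add: power2_eq_square algebra_simps)
    ultimately show ?thesis by (smt (verit))
  qed
  have Q: "6 * (v * (1-p)) \<le> 3 * (A^2-a^2) + b^2"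
  proof -
    have "v * (1-p) \<le> (1/p-u) * (1-p)" by (rule mult_right_mono) (use vd p in auto)
    moreover have "0 \<le> b^2" by simp
    ultimately show ?thesis using sq by (smt (verit))
  qed
  have pv: "0 \<le> v * ((1-p)/2)" using v p by simp
  have pv2: "0 \<le> 6 * (v * (1-p))" using v p by simp
  have M: "(v * ((1-p)/2)) * (6 * (v * (1-p))) \<le> b * (3 * (A^2-a^2) + b^2)"
    by (rule mult_mono) (use bb Q pv pv2 in linarith)+
  moreover have "(v * ((1-p)/2)) * (6 * (v * (1-p))) = 3 * ((1-p)^2 * v^2)" by (simp add: power2_eq_square)
  moreover have "0 \<le> (1-p)^2 * v^2" by simp
  ultimately show ?thesis using F by (smt (verit))
qed

lemma lin5: "(e::real) = Z - Y \<Longrightarrow> W \<le> Z \<Longrightarrow> Y \<le> W/2 \<Longrightarrow> W/2 \<le> e"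
  by linarith

lemma sqe_gen: "(x::real) * (1-p)/2 * (x + 2) = ((1-p) * x^2)/2 + x * (1-p)"
  by (simp add: power2_eq_square field_simps)

lemma lin6: "(V::real) \<le> W \<Longrightarrow> P \<le> S \<Longrightarrow> P = K/2 + W \<Longrightarrow> B \<le> K/32 \<Longrightarrow> 0 \<le> K \<Longrightarrow> 3*V \<le> 3*S - B"
  by linarith

lemma caseR5:
  fixes p u v t :: real
  assumes p: "0<p" "p<1" and t: "0<t" "t \<le> p^2 * (1-p^2)/8"
    and u: "1/p < u" and v: "0<v" "v < (u-1/p) * t"
  shows "FF p u v \<le> - ((1-p)^2 * v^2)"
proof -
  from tsmall[OF p t] have t1: "t \<le> 1" and tt: "t^2 \<le> (1-p)/32" by auto
  define r where "r = u^2+v^2"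
  define a where "a = u + u/r"
  define b where "b = v - v/r"
  define A where "A = p + 1/p"
  have F: "FF p u v = - (b * (3 * (a^2-A^2) - b^2))"
    by (simp add: FF_def Let_def r_def a_def b_def A_def algebra_simps)
  have ip: "1 < 1/p" using p by (simp add: field_simps)
  have u1: "1 < u" using u ip by simp
  have up: "0 < u" using u1 by simp
  have d: "0 < u-1/p" using u by simp
  have vd: "v < u-1/p"
  proof -
    have "(u-1/p) * t \<le> (u-1/p) * 1" by (rule mult_left_mono) (use t1 d in auto)
    thus ?thesis using v by simp
  qed
  have uu: "u \<le> u^2"
  proof -
    have "u * 1 \<le> u * u" by (rule mult_left_mono) (use u1 in auto)
    thus ?thesis by (simp add: power2_eq_square)
  qed
  have rge: "u^2 \<le> r" unfolding r_def by simp
  have r0: "0 < r" using rge uu up by linarith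
  have ru: "u \<le> r" using rge uu by linarith
  have r1: "1 \<le> r" using ru u1 by linarith
  have iu: "1/u \<le> p"
  proof -
    have "1/u \<le> 1/(1/p)" by (rule divide_left_mono) (use u p up in auto)
    thus ?thesis by simp
  qed
  have bb: "v * (1-p) \<le> b"
  proof -
    have "1/r \<le> 1/u" by (rule divide_left_mono) (use ru up r0 in auto)
    hence "1-p \<le> 1 - 1/r" using iu by linarith
    hence "v * (1-p) \<le> v * (1 - 1/r)" by (rule mult_left_mono) (use v in auto)
    thus ?thesis unfolding b_def by (simp add: algebra_simps)
  qed
  have bv: "b \<le> v" unfolding b_def using v r0 by simp
  have b0: "0 \<le> b" using bb v p by (smt (verit) mult_nonneg_nonneg)
  have aA: "a - A = (p-u) * ((1/p-u)/u) - v^2/(u * r)"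
    unfolding a_def A_def by (rule aA_gen) (use up p r0 r_def in auto)
  have e1: "(u-1/p) * (1-p) \<le> (p-u) * ((1/p-u)/u)"
  proof -
    have eq: "(p-u) * ((1/p-u)/u) = (u-1/p) * ((u-p)/u)" using p up by (simp add: field_simps)
    have "1-p \<le> (u-p)/u"
    proof -
      have "p/u \<le> p/1" by (rule divide_left_mono) (use p u1 in auto)
      moreover have "(u-p)/u = 1 - p/u" using up by (simp add: field_simps)
      ultimately show ?thesis by simp
    qed
    hence "(u-1/p) * (1-p) \<le> (u-1/p) * ((u-p)/u)" by (rule mult_left_mono) (use d in auto)
    thus ?thesis unfolding eq .
  qed
  have v2: "v^2 \<le> (u-1/p)^2 * t^2"
  proof -
    have "v^2 \<le> ((u-1/p) * t)^2" by (rule power_mono) (use v in auto)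
    thus ?thesis by (simp add: power_mult_distrib)
  qed
  have e2: "v^2/(u * r) \<le> (u-1/p) * (1-p)/2"
  proof -
    have ur: "u \<le> u * r" using up r1 by simp
    have "v^2/(u * r) \<le> v^2/u" by (rule divide_left_mono) (use ur up r0 in auto)
    also have "\<dots> \<le> ((u-1/p)^2 * t^2)/u" by (rule divide_right_mono) (use v2 up in auto)
    also have "\<dots> \<le> ((u-1/p) * u * t^2)/u"
    proof -
      have "(u-1/p) * (u-1/p) \<le> (u-1/p) * u" by (rule mult_left_mono) (use d p in auto)
      hence "(u-1/p)^2 * t^2 \<le> (u-1/p) * u * t^2" by (simp add: power2_eq_square mult_right_mono)
      thus ?thesis by (rule divide_right_mono) (use up in auto)
    qed
    also have "\<dots> = (u-1/p) * t^2" using up by simp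
    also have "\<dots> \<le> (u-1/p) * ((1-p)/32)" by (rule mult_left_mono) (use tt d in auto)
    also have "\<dots> \<le> (u-1/p) * (1-p)/2" using d p by simp
    finally show ?thesis .
  qed
  have aA2: "(u-1/p) * (1-p)/2 \<le> a - A" by (rule lin5[OF aA e1 e2])
  have A2: "2 \<le> A" unfolding A_def using A_ge2 p by simp
  have "0 < u/r" using up r0 by simp
  hence aU: "u \<le> a" unfolding a_def by linarith
  have aAsum: "(u-1/p) + 2 \<le> a + A" using aU A2 ip by linarith
  have sq: "(u-1/p) * (1-p)/2 * ((u-1/p) + 2) \<le> a^2 - A^2"
  proof -
    have pos: "0 \<le> (u-1/p) * (1-p)/2" using d p by simp
    have "(u-1/p) * (1-p)/2 * ((u-1/p) + 2) \<le> (a-A) * (a+A)" by (rule mult_mono) (use aA2 aAsum pos d in linarith)+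
    moreover have "(a-A) * (a+A) = a^2 - A^2" by (simp add: power2_eq_square algebra_simps)
    ultimately show ?thesis by (smt (verit))
  qed
  have sqe: "(u-1/p) * (1-p)/2 * ((u-1/p) + 2) = ((1-p) * (u-1/p)^2)/2 + (u-1/p) * (1-p)"
    by (rule sqe_gen)
  have b2: "b^2 \<le> ((1-p) * (u-1/p)^2)/32"
  proof -
    have "b^2 \<le> v^2" by (rule power_mono) (use bv b0 in auto)
    also have "\<dots> \<le> (u-1/p)^2 * t^2" by (rule v2)
    also have "\<dots> \<le> (u-1/p)^2 * ((1-p)/32)" by (rule mult_left_mono) (use tt in auto)
    finally show ?thesis by (simp add: mult.commute)
  qed
  have sqpos: "0 \<le> (1-p) * (u-1/p)^2" using p by simp
  have Q: "3 * (v * (1-p)) \<le> 3 * (a^2-A^2) - b^2"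
  proof -
    have "v * (1-p) \<le> (u-1/p) * (1-p)" by (rule mult_right_mono) (use vd p in auto)
    from lin6[OF this sq sqe b2 sqpos] show ?thesis .
  qed
  have pv: "0 \<le> v * (1-p)" using v p by simp
  have pv2: "0 \<le> 3 * (v * (1-p))" using v p by simp
  have M: "(v * (1-p)) * (3 * (v * (1-p))) \<le> b * (3 * (a^2-A^2) - b^2)"
    by (rule mult_mono) (use bb Q pv pv2 in linarith)+
  moreover have "(v * (1-p)) * (3 * (v * (1-p))) = 3 * ((1-p)^2 * v^2)" by (simp add: power2_eq_square)
  moreover have "0 \<le> (1-p)^2 * v^2" by simp
  ultimately show ?thesis using F by (smt (verit))
qed




lemma pos_all:
  fixes p t u v :: real
  assumes p: "0<p" "p<1" and t: "0<t" "t \<le> p^2 * (1-p^2)/8"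
  and H: "(p/2<u \<and> u<p \<and> 0<v \<and> v<(p-u) * t) \<or>
          (p<u \<and> u<(p+1)/2 \<and> -((u-p) * t)<v \<and> v<0) \<or>
          (-p<u \<and> u< -p/2 \<and> 0<v \<and> v<(u+p) * t) \<or>
          ((-p-1)/2<u \<and> u< -p \<and> -((-p-u) * t)<v \<and> v<0) \<or>
          ((1+1/p)/2<u \<and> u<1/p \<and> 0<v \<and> v<(1/p-u) * t) \<or>
          (1/p<u \<and> -((u-1/p) * t)<v \<and> v<0) \<or>
          (-(1/p)<u \<and> u<(-(1/p)-1)/2 \<and> 0<v \<and> v<(u+1/p) * t) \<or>
          (u< -(1/p) \<and> -((-(1/p)-u) * t)<v \<and> v<0)"
  shows "(1-p)^2 * v^2 \<le> FF p u v"
  using H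
proof (elim disjE conjE)
  assume "p/2<u" "u<p" "0<v" "v<(p-u) * t"
  thus ?thesis using caseL1[OF p t] by blast
next
  assume h: "p<u" "u<(p+1)/2" "-((u-p) * t)<v" "v<0"
  have "FF p u (-v) \<le> - ((1-p)^2 * (-v)^2)" by (rule caseR1[OF p t]) (use h in auto)
  thus ?thesis using FF_negv[of p u v] by simp
next
  assume h: "-p<u" "u< -p/2" "0<v" "v<(u+p) * t"
  have "(1-p)^2 * v^2 \<le> FF p (-u) v" by (rule caseL1[OF p t]) (use h in \<open>auto simp: algebra_simps\<close>)
  thus ?thesis using FF_negu[of p u v] by simp
next
  assume h: "(-p-1)/2<u" "u< -p" "-((-p-u) * t)<v" "v<0"
  have "FF p (-u) (-v) \<le> - ((1-p)^2 * (-v)^2)" by (rule caseR1[OF p t]) (use h in \<open>auto simp: algebra_simps\<close>)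
  thus ?thesis using FF_negv[of p "-u" v] FF_negu[of p u v] by simp
next
  assume "(1+1/p)/2<u" "u<1/p" "0<v" "v<(1/p-u) * t"
  thus ?thesis using caseL5[OF p t] by blast
next
  assume h: "1/p<u" "-((u-1/p) * t)<v" "v<0"
  have "FF p u (-v) \<le> - ((1-p)^2 * (-v)^2)" by (rule caseR5[OF p t]) (use h in auto)
  thus ?thesis using FF_negv[of p u v] by simp
next
  assume h: "-(1/p)<u" "u<(-(1/p)-1)/2" "0<v" "v<(u+1/p) * t"
  have "(1-p)^2 * v^2 \<le> FF p (-u) v" by (rule caseL5[OF p t]) (use h in \<open>auto simp: algebra_simps\<close>)
  thus ?thesis using FF_negu[of p u v] by simp
next
  assume h: "u< -(1/p)" "-((-(1/p)-u) * t)<v" "v<0"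
  have "FF p (-u) (-v) \<le> - ((1-p)^2 * (-v)^2)" by (rule caseR5[OF p t]) (use h in \<open>auto simp: algebra_simps\<close>)
  thus ?thesis using FF_negv[of p "-u" v] FF_negu[of p u v] by simp
qed

lemma neg_all:
  fixes p t u v :: real
  assumes p: "0<p" "p<1" and t: "0<t" "t \<le> p^2 * (1-p^2)/8"
  and H: "(p<u \<and> u<(p+1)/2 \<and> 0<v \<and> v<(u-p) * t) \<or>
          (p/2<u \<and> u<p \<and> -((p-u) * t)<v \<and> v<0) \<or>
          ((-p-1)/2<u \<and> u< -p \<and> 0<v \<and> v<(-p-u) * t) \<or>
          (-p<u \<and> u< -p/2 \<and> -((u+p) * t)<v \<and> v<0) \<or>
          (1/p<u \<and> 0<v \<and> v<(u-1/p) * t) \<or>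
          ((1+1/p)/2<u \<and> u<1/p \<and> -((1/p-u) * t)<v \<and> v<0) \<or>
          (u< -(1/p) \<and> 0<v \<and> v<(-(1/p)-u) * t) \<or>
          (-(1/p)<u \<and> u<(-(1/p)-1)/2 \<and> -((u+1/p) * t)<v \<and> v<0)"
  shows "FF p u v \<le> - ((1-p)^2 * v^2)"
  using H
proof (elim disjE conjE)
  assume "p<u" "u<(p+1)/2" "0<v" "v<(u-p) * t"
  thus ?thesis using caseR1[OF p t] by blast
next
  assume h: "p/2<u" "u<p" "-((p-u) * t)<v" "v<0"
  have "(1-p)^2 * (-v)^2 \<le> FF p u (-v)" by (rule caseL1[OF p t]) (use h in auto)
  thus ?thesis using FF_negv[of p u v] by simp
next
  assume h: "(-p-1)/2<u" "u< -p" "0<v" "v<(-p-u) * t"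
  have "FF p (-u) v \<le> - ((1-p)^2 * v^2)" by (rule caseR1[OF p t]) (use h in \<open>auto simp: algebra_simps\<close>)
  thus ?thesis using FF_negu[of p u v] by simp
next
  assume h: "-p<u" "u< -p/2" "-((u+p) * t)<v" "v<0"
  have "(1-p)^2 * (-v)^2 \<le> FF p (-u) (-v)" by (rule caseL1[OF p t]) (use h in \<open>auto simp: algebra_simps\<close>)
  thus ?thesis using FF_negv[of p "-u" v] FF_negu[of p u v] by simp
next
  assume "1/p<u" "0<v" "v<(u-1/p) * t"
  thus ?thesis using caseR5[OF p t] by blast
next
  assume h: "(1+1/p)/2<u" "u<1/p" "-((1/p-u) * t)<v" "v<0"
  have "(1-p)^2 * (-v)^2 \<le> FF p u (-v)" by (rule caseL5[OF p t]) (use h in auto)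
  thus ?thesis using FF_negv[of p u v] by simp
next
  assume h: "u< -(1/p)" "0<v" "v<(-(1/p)-u) * t"
  have "FF p (-u) v \<le> - ((1-p)^2 * v^2)" by (rule caseR5[OF p t]) (use h in \<open>auto simp: algebra_simps\<close>)
  thus ?thesis using FF_negu[of p u v] by simp
next
  assume h: "-(1/p)<u" "u<(-(1/p)-1)/2" "-((u+1/p) * t)<v" "v<0"
  have "(1-p)^2 * (-v)^2 \<le> FF p (-u) (-v)" by (rule caseL5[OF p t]) (use h in \<open>auto simp: algebra_simps\<close>)
  thus ?thesis using FF_negv[of p "-u" v] FF_negu[of p u v] by simp
qed




lemma memb:
  assumes "p = zeta1 xi" "t = tan phi" "u = Re z" "v = Im z"
  shows
   "z \<in> Omega xi phi 1 1 \<Longrightarrow> p/2<u \<and> u<p \<and> 0<v \<and> v<(p-u) * t"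
   "z \<in> Omega xi phi 1 2 \<Longrightarrow> p<u \<and> u<(p+1)/2 \<and> 0<v \<and> v<(u-p) * t"
   "z \<in> Omega xi phi 1 3 \<Longrightarrow> p<u \<and> u<(p+1)/2 \<and> -((u-p) * t)<v \<and> v<0"
   "z \<in> Omega xi phi 1 4 \<Longrightarrow> p/2<u \<and> u<p \<and> -((p-u) * t)<v \<and> v<0"
   "z \<in> Omega xi phi 2 1 \<Longrightarrow> -p<u \<and> u< -p/2 \<and> 0<v \<and> v<(u+p) * t"
   "z \<in> Omega xi phi 2 2 \<Longrightarrow> (-p-1)/2<u \<and> u< -p \<and> 0<v \<and> v<(-p-u) * t"
   "z \<in> Omega xi phi 2 3 \<Longrightarrow> (-p-1)/2<u \<and> u< -p \<and> -((-p-u) * t)<v \<and> v<0"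
   "z \<in> Omega xi phi 2 4 \<Longrightarrow> -p<u \<and> u< -p/2 \<and> -((u+p) * t)<v \<and> v<0"
   "z \<in> Omega xi phi 5 1 \<Longrightarrow> (1+1/p)/2<u \<and> u<1/p \<and> 0<v \<and> v<(1/p-u) * t"
   "z \<in> Omega xi phi 5 2 \<Longrightarrow> 1/p<u \<and> 0<v \<and> v<(u-1/p) * t"
   "z \<in> Omega xi phi 5 3 \<Longrightarrow> 1/p<u \<and> -((u-1/p) * t)<v \<and> v<0"
   "z \<in> Omega xi phi 5 4 \<Longrightarrow> (1+1/p)/2<u \<and> u<1/p \<and> -((1/p-u) * t)<v \<and> v<0"
   "z \<in> Omega xi phi 6 1 \<Longrightarrow> -(1/p)<u \<and> u<(-(1/p)-1)/2 \<and> 0<v \<and> v<(u+1/p) * t"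
   "z \<in> Omega xi phi 6 2 \<Longrightarrow> u< -(1/p) \<and> 0<v \<and> v<(-(1/p)-u) * t"
   "z \<in> Omega xi phi 6 3 \<Longrightarrow> u< -(1/p) \<and> -((-(1/p)-u) * t)<v \<and> v<0"
   "z \<in> Omega xi phi 6 4 \<Longrightarrow> -(1/p)<u \<and> u<(-(1/p)-1)/2 \<and> -((u+1/p) * t)<v \<and> v<0"
  using assms by (simp_all add: Omega_def Let_def zeta2_def zeta5_def zeta6_def algebra_simps)




lemma u_nz:
  fixes p q t u v :: real
  assumes "0 < p" "0 < q"
  and H: "(p/2<u \<and> u<p \<and> 0<v \<and> v<(p-u) * t) \<or>
          (p<u \<and> u<(p+1)/2 \<and> -((u-p) * t)<v \<and> v<0) \<or>
          (-p<u \<and> u< -p/2 \<and> 0<v \<and> v<(u+p) * t) \<or>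
          ((-p-1)/2<u \<and> u< -p \<and> -((-p-u) * t)<v \<and> v<0) \<or>
          ((1+q)/2<u \<and> u<q \<and> 0<v \<and> v<(q-u) * t) \<or>
          (q<u \<and> -((u-q) * t)<v \<and> v<0) \<or>
          (-(q)<u \<and> u<(-(q)-1)/2 \<and> 0<v \<and> v<(u+q) * t) \<or>
          (u< -(q) \<and> -((-(q)-u) * t)<v \<and> v<0)"
  shows "u \<noteq> 0"
  using H assms(1,2) by (elim disjE conjE) (simp_all add: field_simps)

lemma u_nz2:
  fixes p q t u v :: real
  assumes "0 < p" "0 < q"
  and H: "(p<u \<and> u<(p+1)/2 \<and> 0<v \<and> v<(u-p) * t) \<or>
          (p/2<u \<and> u<p \<and> -((p-u) * t)<v \<and> v<0) \<or>
          ((-p-1)/2<u \<and> u< -p \<and> 0<v \<and> v<(-p-u) * t) \<or>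
          (-p<u \<and> u< -p/2 \<and> -((u+p) * t)<v \<and> v<0) \<or>
          (q<u \<and> 0<v \<and> v<(u-q) * t) \<or>
          ((1+q)/2<u \<and> u<q \<and> -((q-u) * t)<v \<and> v<0) \<or>
          (u< -(q) \<and> 0<v \<and> v<(-(q)-u) * t) \<or>
          (-(q)<u \<and> u<(-(q)-1)/2 \<and> -((u+q) * t)<v \<and> v<0)"
  shows "u \<noteq> 0"
  using H assms(1,2) by (elim disjE conjE) (simp_all add: field_simps)

theorem mainTheorem5:
  fixes xi :: real
  assumes "xi < -6"
  shows "\<exists>phi0. 0 < phi0 \<and> phi0 \<le> pi/4 \<and>
    (\<forall>phi. 0 < phi \<and> phi \<le> phi0 \<longrightarrow>
      (\<exists>c>0. \<forall>i\<in>{1,2,5,6::nat}.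
         (\<forall>z \<in> Omega xi phi i 1 \<union> Omega xi phi i 3.
             Re (2 * \<i> * theta xi z) \<ge> c * (Im z)^2) \<and>
         (\<forall>z \<in> Omega xi phi i 2 \<union> Omega xi phi i 4.
             Re (2 * \<i> * theta xi z) \<le> - c * (Im z)^2)))"
proof -
  define p where "p = zeta1 xi"
  have p0: "0<p" and p1: "p<1" and pA: "3*(p+1/p)^2 = 6 - xi"
    using zeta1_props[OF assms] by (auto simp: p_def)
  have z2: "zeta2 xi = -p" and z5: "zeta5 xi = 1/p" and z6: "zeta6 xi = -(1/p)"
    by (simp_all add: zeta2_def zeta5_def zeta6_def p_def)
  have ip0: "0 < 1/p" using p0 by simp
  define t0 where "t0 = p^2 * (1-p^2)/8"
  have p2: "0<p^2" "p^2<1" using p0 p1 by (auto simp: power_less_one_iff)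
  have t0pos: "0<t0" unfolding t0_def using p2 by simp
  have t0le1: "t0 \<le> 1" using tsmall(1)[OF p0 p1 t0pos] t0_def by simp
  show ?thesis
  proof (rule exI[of _ "arctan t0"], intro conjI allI impI)
    show "0 < arctan t0" using t0pos by simp
    show "arctan t0 \<le> pi/4" by (metis arctan_le_iff arctan_one t0le1)
    fix phi assume ph: "0 < phi \<and> phi \<le> arctan t0"
    define t where "t = tan phi"
    have ub: "arctan t0 < pi/2" by (rule arctan_ubound)
    have tpos: "0<t" unfolding t_def using ph ub by (intro tan_gt_zero) auto
    have "tan phi \<le> tan (arctan t0)" using ph ub by (intro tan_mono_le) auto
    hence tle: "t \<le> p^2 * (1-p^2)/8" by (simp add: t_def tan_arctan t0_def)
    note tt = tpos tle
    show "\<exists>c>0. \<forall>i\<in>{1,2,5,6::nat}.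
         (\<forall>z \<in> Omega xi phi i 1 \<union> Omega xi phi i 3.
             Re (2 * \<i> * theta xi z) \<ge> c * (Im z)^2) \<and>
         (\<forall>z \<in> Omega xi phi i 2 \<union> Omega xi phi i 4.
             Re (2 * \<i> * theta xi z) \<le> - c * (Im z)^2)"
    proof (intro exI[of _ "(1-p)^2"] conjI ballI)
      show "0 < (1-p)^2" using p1 by simp
    next
      fix i :: nat and z assume i: "i \<in> {1,2,5,6}" and z: "z \<in> Omega xi phi i 1 \<union> Omega xi phi i 3"
      define u where "u = Re z"
      define v where "v = Im z"
      have H: "(p/2<u \<and> u<p \<and> 0<v \<and> v<(p-u) * t) \<or>
          (p<u \<and> u<(p+1)/2 \<and> -((u-p) * t)<v \<and> v<0) \<or>
          (-p<u \<and> u< -p/2 \<and> 0<v \<and> v<(u+p) * t) \<or>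
          ((-p-1)/2<u \<and> u< -p \<and> -((-p-u) * t)<v \<and> v<0) \<or>
          ((1+1/p)/2<u \<and> u<1/p \<and> 0<v \<and> v<(1/p-u) * t) \<or>
          (1/p<u \<and> -((u-1/p) * t)<v \<and> v<0) \<or>
          (-(1/p)<u \<and> u<(-(1/p)-1)/2 \<and> 0<v \<and> v<(u+1/p) * t) \<or>
          (u< -(1/p) \<and> -((-(1/p)-u) * t)<v \<and> v<0)"
      proof -
        note m = memb[OF p_def t_def u_def v_def]
        from i consider "i=1" | "i=2" | "i=5" | "i=6" by auto
        thus ?thesis
        proof cases
          case 1 with z have "z \<in> Omega xi phi 1 1 \<or> z \<in> Omega xi phi 1 3" by simp
          thus ?thesis
          proof
            assume "z \<in> Omega xi phi 1 1"
            from m(1)[OF this] show ?thesis by blast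
          next
            assume "z \<in> Omega xi phi 1 3"
            from m(3)[OF this] show ?thesis by blast
          qed
        next
          case 2 with z have "z \<in> Omega xi phi 2 1 \<or> z \<in> Omega xi phi 2 3" by simp
          thus ?thesis
          proof
            assume "z \<in> Omega xi phi 2 1"
            from m(5)[OF this] show ?thesis by blast
          next
            assume "z \<in> Omega xi phi 2 3"
            from m(7)[OF this] show ?thesis by blast
          qed
        next
          case 3 with z have "z \<in> Omega xi phi 5 1 \<or> z \<in> Omega xi phi 5 3" by simp
          thus ?thesis
          proof
            assume "z \<in> Omega xi phi 5 1"
            from m(9)[OF this] show ?thesis by blast
          next
            assume "z \<in> Omega xi phi 5 3"
            from m(11)[OF this] show ?thesis by blast
          qed
        next
          case 4 with z have "z \<in> Omega xi phi 6 1 \<or> z \<in> Omega xi phi 6 3" by simp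
          thus ?thesis
          proof
            assume "z \<in> Omega xi phi 6 1"
            from m(13)[OF this] show ?thesis by blast
          next
            assume "z \<in> Omega xi phi 6 3"
            from m(15)[OF this] show ?thesis by blast
          qed
        qed
      qed
      have "u \<noteq> 0" by (rule u_nz[OF p0 ip0 H])
      hence nz: "z \<noteq> 0" unfolding u_def by auto
      have "(1-p)^2 * v^2 \<le> FF p u v" by (rule pos_all[OF p0 p1 tt H])
      thus "(1-p)^2 * (Im z)^2 \<le> Re (2 * \<i> * theta xi z)"
        using Re_theta[OF nz pA] by (simp add: u_def v_def)
    next
      fix i :: nat and z assume i: "i \<in> {1,2,5,6}" and z: "z \<in> Omega xi phi i 2 \<union> Omega xi phi i 4"
      define u where "u = Re z"
      define v where "v = Im z"
      have H: "(p<u \<and> u<(p+1)/2 \<and> 0<v \<and> v<(u-p) * t) \<or>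
          (p/2<u \<and> u<p \<and> -((p-u) * t)<v \<and> v<0) \<or>
          ((-p-1)/2<u \<and> u< -p \<and> 0<v \<and> v<(-p-u) * t) \<or>
          (-p<u \<and> u< -p/2 \<and> -((u+p) * t)<v \<and> v<0) \<or>
          (1/p<u \<and> 0<v \<and> v<(u-1/p) * t) \<or>
          ((1+1/p)/2<u \<and> u<1/p \<and> -((1/p-u) * t)<v \<and> v<0) \<or>
          (u< -(1/p) \<and> 0<v \<and> v<(-(1/p)-u) * t) \<or>
          (-(1/p)<u \<and> u<(-(1/p)-1)/2 \<and> -((u+1/p) * t)<v \<and> v<0)"
      proof -
        note m = memb[OF p_def t_def u_def v_def]
        from i consider "i=1" | "i=2" | "i=5" | "i=6" by auto
        thus ?thesis
        proof cases
          case 1 with z have "z \<in> Omega xi phi 1 2 \<or> z \<in> Omega xi phi 1 4" by simp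
          thus ?thesis
          proof
            assume "z \<in> Omega xi phi 1 2"
            from m(2)[OF this] show ?thesis by blast
          next
            assume "z \<in> Omega xi phi 1 4"
            from m(4)[OF this] show ?thesis by blast
          qed
        next
          case 2 with z have "z \<in> Omega xi phi 2 2 \<or> z \<in> Omega xi phi 2 4" by simp
          thus ?thesis
          proof
            assume "z \<in> Omega xi phi 2 2"
            from m(6)[OF this] show ?thesis by blast
          next
            assume "z \<in> Omega xi phi 2 4"
            from m(8)[OF this] show ?thesis by blast
          qed
        next
          case 3 with z have "z \<in> Omega xi phi 5 2 \<or> z \<in> Omega xi phi 5 4" by simp
          thus ?thesis
          proof
            assume "z \<in> Omega xi phi 5 2"
            from m(10)[OF this] show ?thesis by blast
          next
            assume "z \<in> Omega xi phi 5 4"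
            from m(12)[OF this] show ?thesis by blast
          qed
        next
          case 4 with z have "z \<in> Omega xi phi 6 2 \<or> z \<in> Omega xi phi 6 4" by simp
          thus ?thesis
          proof
            assume "z \<in> Omega xi phi 6 2"
            from m(14)[OF this] show ?thesis by blast
          next
            assume "z \<in> Omega xi phi 6 4"
            from m(16)[OF this] show ?thesis by blast
          qed
        qed
      qed
      have "u \<noteq> 0" by (rule u_nz2[OF p0 ip0 H])
      hence nz: "z \<noteq> 0" unfolding u_def by auto
      have "FF p u v \<le> - ((1-p)^2 * v^2)" by (rule neg_all[OF p0 p1 tt H])
      thus "Re (2 * \<i> * theta xi z) \<le> - ((1-p)^2) * (Im z)^2"
        using Re_theta[OF nz pA] by (simp add: u_def v_def)
    qed
  qed
qed


end
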